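(* Let $\mathcal{C}$ be a polyhedral complex in $\mathbb{R}^n$ all of whose cells are pointed. Then: (a) if $P_1,P_2\in\mathcal{C}$ and $p\in P_1\cap P_2$, then $\mathrm{base}_{P_1}(p)=\mathrm{base}_{P_2}(p)$, so $\mathrm{base}_{\mathcal{C}}:|\mathcal{C}|\to|\mathrm{com.part}(\mathcal{C})|$, $\mathrm{base}_{\mathcal{C}}(p)=\mathrm{base}_P(p)$ for any cell $P\ni p$, is well defined; (b) $\mathrm{base}_{\mathcal{C}}$ is continuous; and (c) $\Phi(p,t)=t\,\mathrm{base}_{\mathcal{C}}(p)+(1-t)p$ is a strong deformation retraction of $|\mathcal{C}|$ onto $|\mathrm{com.part}(\mathcal{C})|$.
   Context: A polyhedral complex is a finite set of polyhedral sets (cells) closed under taking faces in which any two cells intersect in a common face; $|\mathcal{C}|$ is the union of cells. For a polyhedral set $P$, $\mathrm{char.cone}(P)=\{y:x+y\in P\ \forall x\in P\}$; $P$ is pointed if $\mathrm{char.cone}(P)\cap-\mathrm{char.cone}(P)=\{0\}$. $K_P$ is the convex hull of the vertices of $P$, $\widetilde K_P$ the set of all faces of $K_P$, and $\mathrm{com.part}(\mathcal{C})=\bigcup_{C\in\mathcal{C}}\widetilde K_C$, with $|\mathrm{com.part}(\mathcal{C})|=\bigcup_C K_C$. For $p\in P$, $\mathrm{base}_P(p)$ is the unique point $x\in K_P$ with $p-x\in\mathrm{char.cone}(P)$ minimizing $|p-x|$. A strong deformation retraction of $X$ onto $A$ is a continuous $H:X\times[0,1]\to X$ with $H(x,0)=x$,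 $H(x,1)\in A$, $H(a,t)=a$ for $a\in A$. *)

theory Defs
  imports "HOL-Analysis.Analysis"
begin

definition polyhedral_complex :: "'a::euclidean_space set set \<Rightarrow> bool" where
  "polyhedral_complex \<C> \<longleftrightarrow>
     finite \<C> \<and>
     (\<forall>P\<in>\<C>. polyhedron P \<and> P \<noteq> {}) \<and>
     (\<forall>P F. P \<in> \<C> \<and> F face_of P \<and> F \<noteq> {} \<longrightarrow> F \<in> \<C>) \<and>
     (\<forall>P Q. P \<in> \<C> \<and> Q \<in> \<C> \<longrightarrow> (P \<inter> Q) face_of P \<and> (P \<inter> Q) face_of Q)"

definition char_cone :: "'a::real_vector set \<Rightarrow> 'a set" where
  "char_cone P = {y. \<forall>x\<in>P. x + y \<in> P}"

definition pointed :: "'a::real_vector set \<Rightarrow> bool" where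
  "pointed P \<longleftrightarrow> char_cone P \<inter> uminus ` char_cone P = {0}"

definition vertices :: "'a::real_vector set \<Rightarrow> 'a set" where
  "vertices P = {v. v extreme_point_of P}"

definition KP :: "'a::real_vector set \<Rightarrow> 'a set" where
  "KP P = convex hull (vertices P)"

definition com_part :: "'a::real_vector set set \<Rightarrow> 'a set set" where
  "com_part \<C> = (\<Union>P\<in>\<C>. {F. F face_of KP P})"

definition base :: "'a::real_normed_vector set \<Rightarrow> 'a \<Rightarrow> 'a" where
  "base P p = (THE x. x \<in> KP P \<and> p - x \<in> char_cone P \<and>
       (\<forall>y\<in>KP P. p - y \<in> char_cone P \<longrightarrow> norm (p - x) \<le> norm (p - y)))"

definition base_complex :: "'a::real_normed_vector set set \<Rightarrow> 'a \<Rightarrow> 'a" where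
  "base_complex \<C> p = base (SOME P. P \<in> \<C> \<and> p \<in> P) p"

definition strong_deformation_retraction ::
    "'a::topological_space set \<Rightarrow> 'a set \<Rightarrow> ('a \<times> real \<Rightarrow> 'a) \<Rightarrow> bool" where
  "strong_deformation_retraction X A H \<longleftrightarrow>
     A \<subseteq> X \<and>
     continuous_on (X \<times> {0..1}) H \<and> H ` (X \<times> {0..1}) \<subseteq> X \<and>
     (\<forall>x\<in>X. H (x, 0) = x) \<and> (\<forall>x\<in>X. H (x, 1) \<in> A) \<and>
     (\<forall>a\<in>A. \<forall>t\<in>{0..1}. H (a, t) = a)"

end

theory Submission
  imports Defs
begin

lemma poly_rep:
  fixes P :: "'a::euclidean_space set"
  assumes "polyhedron P"
  obtains H :: "('a \<times> real) set" where "finite H" "P = {x. \<forall>h\<in>H. fst h \<bullet> x \<le> snd h}"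
proof -
  obtain F where F: "finite F" "P = \<Inter>F" "\<forall>h\<in>F. \<exists>a b. a \<noteq> 0 \<and> h = {x. a \<bullet> x \<le> b}"
    using assms unfolding polyhedron_def by blast
  have "\<forall>h\<in>F. \<exists>ab. h = {x. fst ab \<bullet> x \<le> snd ab}"
  proof
    fix h assume "h \<in> F"
    then obtain a b where "h = {x. a \<bullet> x \<le> b}" using F(3) by blast
    then show "\<exists>ab. h = {x. fst ab \<bullet> x \<le> snd ab}" by (intro exI[of _ "(a,b)"]) simp
  qed
  then obtain ab where ab0: "\<forall>h\<in>F. h = {x. fst (ab h) \<bullet> x \<le> snd (ab h)}"
    by (rule bchoice[elim_format]) blast
  have "P = {x. \<forall>h\<in>ab ` F. fst h \<bullet> x \<le> snd h}"
  proof -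
    have "P = {x. \<forall>h\<in>F. x \<in> h}" using F(2) by auto
    also have "\<dots> = {x. \<forall>h\<in>F. fst (ab h) \<bullet> x \<le> snd (ab h)}"
    proof (intro Collect_cong ball_cong refl)
      fix x h assume "h \<in> F"
      then have "h = {x. fst (ab h) \<bullet> x \<le> snd (ab h)}" using ab0 by blast
      then show "x \<in> h \<longleftrightarrow> fst (ab h) \<bullet> x \<le> snd (ab h)" by (metis mem_Collect_eq)
    qed
    also have "\<dots> = {x. \<forall>h\<in>ab ` F. fst h \<bullet> x \<le> snd h}" by simp
    finally show ?thesis .
  qed
  moreover have "finite (ab ` F)" using F(1) by simp
  ultimately show ?thesis using that by blast
qed

lemma cc_0: "0 \<in> char_cone P"
  by (simp add: char_cone_def)

lemma cc_add: assumes "y \<in> char_cone P" "z \<in> char_cone P" shows "y + z \<in> char_cone P"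
  unfolding char_cone_def
proof (intro CollectI ballI)
  fix x assume "x \<in> P"
  then have "x + y \<in> P" using assms(1) unfolding char_cone_def by blast
  then have "(x + y) + z \<in> P" using assms(2) unfolding char_cone_def by blast
  then show "x + (y + z) \<in> P" by (simp add: add.assoc)
qed

lemma cc_nat: "y \<in> char_cone P \<Longrightarrow> x \<in> P \<Longrightarrow> x + of_nat n *\<^sub>R y \<in> P"
proof (induction n)
  case 0 then show ?case by simp
next
  case (Suc n)
  then have "x + of_nat n *\<^sub>R y + y \<in> P" unfolding char_cone_def by blast
  then show ?case by (simp add: algebra_simps)
qed

lemma cc_scale:
  assumes "convex P" "y \<in> char_cone P" "t \<ge> 0"
  shows "t *\<^sub>R y \<in> char_cone P"
  unfolding char_cone_def
proof (intro CollectI ballI)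
  fix x assume x: "x \<in> P"
  define n where "n = nat \<lceil>t\<rceil>"
  have tn: "t \<le> real n" unfolding n_def by linarith
  show "x + t *\<^sub>R y \<in> P"
  proof (cases "n = 0")
    case True then have "t = 0" using tn assms(3) by simp
    then show ?thesis using x by simp
  next
    case False
    then have np: "real n > 0" by simp
    have xn: "x + real n *\<^sub>R y \<in> P" using cc_nat[OF assms(2) x] by simp
    have "(1 - t / real n) *\<^sub>R x + (t / real n) *\<^sub>R (x + real n *\<^sub>R y) \<in> P"
    proof (rule convexD[OF assms(1) x xn])
      show "0 \<le> 1 - t / real n" using np tn by (simp add: field_simps)
      show "0 \<le> t / real n" using np assms(3) by simp
    qed simp
    moreover have "(1 - t / real n) *\<^sub>R x + (t / real n) *\<^sub>R (x + real n *\<^sub>R y) = x + t *\<^sub>R y"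
      using np by (simp add: algebra_simps)
    ultimately show ?thesis by simp
  qed
qed

lemma cc_convex:
  assumes "convex P" shows "convex (char_cone P)"
  unfolding convex_def
proof (intro ballI allI impI)
  fix x y and u v :: real
  assume "x \<in> char_cone P" "y \<in> char_cone P" "0 \<le> u" "0 \<le> v"
  then show "u *\<^sub>R x + v *\<^sub>R y \<in> char_cone P"
    by (intro cc_add cc_scale[OF assms])
qed

lemma cc_closed:
  fixes P :: "'a::real_normed_vector set"
  assumes "closed P" shows "closed (char_cone P)"
proof -
  have "char_cone P = (\<Inter>x\<in>P. (\<lambda>y. x + y) -` P)"
    unfolding char_cone_def by auto
  moreover have "closed ((\<lambda>y. x + y) -` P)" for x
    by (intro closed_vimage assms continuous_intros)
  ultimately show ?thesis by auto
qed

lemma cc_from_ray: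
  fixes P :: "'a::real_normed_vector set"
  assumes "closed P" "convex P" "f \<in> P" "\<And>n::nat. f + of_nat n *\<^sub>R c \<in> P"
  shows "c \<in> char_cone P"
  unfolding char_cone_def
proof (intro CollectI ballI)
  fix y assume y: "y \<in> P"
  define z where "z n = y + c + inverse (real (Suc n)) *\<^sub>R (f - y)" for n
  have "z n \<in> P" for n
  proof -
    define i where "i = inverse (real (Suc n))"
    have i0: "0 \<le> i" "i \<le> 1" unfolding i_def by (simp_all add: field_simps)
    have i1: "i * real (Suc n) = 1" unfolding i_def by simp
    have "(1 - i) *\<^sub>R y + i *\<^sub>R (f + of_nat (Suc n) *\<^sub>R c) \<in> P"
      by (rule convexD[OF assms(2) y assms(4)]) (use i0 in auto)
    moreover have "(1 - i) *\<^sub>R y + i *\<^sub>R (f + of_nat (Suc n) *\<^sub>R c) = y + c + i *\<^sub>R (f - y)"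
    proof -
      have "i *\<^sub>R (of_nat (Suc n) *\<^sub>R c) = c" using i1 by (simp only: scaleR_scaleR) simp
      then show ?thesis by (simp add: algebra_simps)
    qed
    ultimately show ?thesis unfolding z_def i_def by simp
  qed
  moreover have "z \<longlonglongrightarrow> y + c + 0 *\<^sub>R (f - y)"
  proof -
    have "(\<lambda>n. inverse (real (Suc n))) \<longlonglongrightarrow> 0" by (rule LIMSEQ_inverse_real_of_nat)
    then have "(\<lambda>n. inverse (real (Suc n)) *\<^sub>R (f - y)) \<longlonglongrightarrow> 0 *\<^sub>R (f - y)"
      by (rule tendsto_scaleR[OF _ tendsto_const])
    then show ?thesis unfolding z_def by (rule tendsto_add[OF tendsto_const])
  qed
  ultimately have "y + c + 0 *\<^sub>R (f - y) \<in> P"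
    using assms(1) unfolding closed_sequential_limits by blast
  then show "y + c \<in> P" by simp
qed

lemma move_step:
  fixes H :: "('a::euclidean_space \<times> real) set"
  assumes fin: "finite H" and P: "P = {x. \<forall>h\<in>H. fst h \<bullet> x \<le> snd h}" and x: "x \<in> P"
    and act: "\<forall>h\<in>H. fst h \<bullet> x = snd h \<longrightarrow> fst h \<bullet> d = 0"
    and pos: "\<exists>h\<in>H. fst h \<bullet> d > 0"
  shows "\<exists>t>0. x + t *\<^sub>R d \<in> P \<and>
           card {h\<in>H. fst h \<bullet> (x + t *\<^sub>R d) < snd h} < card {h\<in>H. fst h \<bullet> x < snd h}"
proof -
  define J where "J = {h\<in>H. fst h \<bullet> d > 0}"
  define r where "r h = (snd h - fst h \<bullet> x) / (fst h \<bullet> d)" for h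
  have finJ: "finite J" using fin unfolding J_def by simp
  have J0: "J \<noteq> {}" using pos unfolding J_def by blast
  have xle: "fst h \<bullet> x \<le> snd h" if "h \<in> H" for h using x that unfolding P by blast
  have Jin: "fst h \<bullet> x < snd h" if "h \<in> J" for h
  proof -
    have "h \<in> H" "fst h \<bullet> d > 0" using that unfolding J_def by auto
    then show ?thesis using act xle[of h] by force
  qed
  have rpos: "r h > 0" if "h \<in> J" for h
    using Jin[OF that] that unfolding J_def r_def by (simp add: field_simps)
  define t where "t = Min (r ` J)"
  have tin: "t \<in> r ` J" unfolding t_def using finJ J0 by (intro Min_in) auto
  then obtain h0 where h0: "h0 \<in> J" "r h0 = t" by blast
  have tle: "t \<le> r h" if "h \<in> J" for h unfolding t_def using finJ that by (intro Min_le) auto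
  have tpos: "t > 0" using rpos[OF h0(1)] h0(2) by simp
  define y where "y = x + t *\<^sub>R d"
  have iy: "fst h \<bullet> y = fst h \<bullet> x + t * (fst h \<bullet> d)" for h
    unfolding y_def by (simp add: inner_add_right)
  have yP: "y \<in> P"
    unfolding P
  proof (intro CollectI ballI)
    fix h assume hH: "h \<in> H"
    show "fst h \<bullet> y \<le> snd h"
    proof (cases "fst h \<bullet> d > 0")
      case True
      then have "h \<in> J" using hH unfolding J_def by blast
      then have "t * (fst h \<bullet> d) \<le> r h * (fst h \<bullet> d)" using tle True by (intro mult_right_mono) auto
      also have "\<dots> = snd h - fst h \<bullet> x" unfolding r_def using True by simp
      finally show ?thesis using iy[of h] by linarith
    next
      case False
      then have "t * (fst h \<bullet> d) \<le> 0" using tpos by (simp add: mult_nonneg_nonpos)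
      then show ?thesis using iy[of h] xle[OF hH] by linarith
    qed
  qed
  have sub: "{h\<in>H. fst h \<bullet> y < snd h} \<subseteq> {h\<in>H. fst h \<bullet> x < snd h}"
  proof
    fix h assume "h \<in> {h\<in>H. fst h \<bullet> y < snd h}"
    then have hH: "h \<in> H" and lt: "fst h \<bullet> y < snd h" by auto
    show "h \<in> {h\<in>H. fst h \<bullet> x < snd h}"
    proof (rule ccontr)
      assume "h \<notin> {h\<in>H. fst h \<bullet> x < snd h}"
      then have "fst h \<bullet> x = snd h" using xle[OF hH] hH by auto
      then have "fst h \<bullet> d = 0" "fst h \<bullet> x = snd h" using act hH by auto
      then show False using lt iy[of h] by simp
    qed
  qed
  have h0H: "h0 \<in> H" and h0d: "fst h0 \<bullet> d > 0" using h0(1) unfolding J_def by auto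
  have "fst h0 \<bullet> y = snd h0"
    using iy[of h0] h0(2) h0d unfolding r_def by (simp add: field_simps)
  then have "h0 \<notin> {h\<in>H. fst h \<bullet> y < snd h}" by simp
  moreover have "h0 \<in> {h\<in>H. fst h \<bullet> x < snd h}" using Jin[OF h0(1)] h0H by simp
  ultimately have "{h\<in>H. fst h \<bullet> y < snd h} \<subset> {h\<in>H. fst h \<bullet> x < snd h}" using sub by blast
  then have "card {h\<in>H. fst h \<bullet> y < snd h} < card {h\<in>H. fst h \<bullet> x < snd h}"
    by (rule psubset_card_mono[rotated]) (simp add: fin)
  then show ?thesis using tpos yP unfolding y_def by blast
qed

lemma comb_eq_aux:
  fixes s u v b :: real
  assumes "0 < s" "s < 1" "u \<le> b" "v \<le> b" "(1 - s) * u + s * v = b"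
  shows "u = b \<and> v = b"
proof (rule ccontr)
  assume "\<not> (u = b \<and> v = b)"
  then have "u < b \<or> v < b" using assms by linarith
  moreover have "(1 - s) * u \<le> (1 - s) * b" "s * v \<le> s * b" using assms by (simp_all add: mult_left_mono)
  moreover have "u < b \<Longrightarrow> (1 - s) * u < (1 - s) * b" using assms by (simp add: mult_strict_left_mono)
  moreover have "v < b \<Longrightarrow> s * v < s * b" using assms by (simp add: mult_strict_left_mono)
  ultimately have "(1 - s) * u + s * v < (1 - s) * b + s * b" by linarith
  then show False using assms(5) by (simp add: algebra_simps)
qed

lemma cc_of_rep:
  fixes H :: "('a::euclidean_space \<times> real) set"
  assumes P: "P = {x. \<forall>h\<in>H. fst h \<bullet> x \<le> snd h}" and d: "\<forall>h\<in>H. fst h \<bullet> d \<le> 0"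
  shows "d \<in> char_cone P"
  unfolding char_cone_def
proof (intro CollectI ballI)
  fix y assume "y \<in> P"
  then have "fst h \<bullet> y \<le> snd h" if "h \<in> H" for h using that P by blast
  then show "y + d \<in> P" unfolding P
  proof (intro CollectI ballI)
    fix h assume "h \<in> H"
    then have "fst h \<bullet> y \<le> snd h" "fst h \<bullet> d \<le> 0" using \<open>\<And>h. h \<in> H \<Longrightarrow> fst h \<bullet> y \<le> snd h\<close> d by auto
    then show "fst h \<bullet> (y + d) \<le> snd h" by (simp add: inner_add_right)
  qed
qed

lemma pointedD:
  assumes "pointed P" "d \<in> char_cone P" "- d \<in> char_cone P"
  shows "d = 0"
proof -
  have "d \<in> uminus ` char_cone P" using assms(3) by (metis image_eqI minus_minus)
  then have "d \<in> char_cone P \<inter> uminus ` char_cone P" using assms(2) by blast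
  then show ?thesis using assms(1) unfolding pointed_def by blast
qed

lemma KP_convex: "convex (KP P)" unfolding KP_def by (rule convex_convex_hull)

lemma exists_base_point:
  fixes P :: "'a::euclidean_space set"
  assumes poly: "polyhedron P" and pt: "pointed P" and x0: "x0 \<in> P"
  shows "\<exists>k\<in>KP P. x0 - k \<in> char_cone P"
proof -
  obtain H :: "('a \<times> real) set" where fin: "finite H" and P: "P = {x. \<forall>h\<in>H. fst h \<bullet> x \<le> snd h}"
    using poly_rep[OF poly] by blast
  have cvx: "convex P" using poly by (rule polyhedron_imp_convex)
  have key: "\<forall>x. x \<in> P \<longrightarrow> card {h\<in>H. fst h \<bullet> x < snd h} = n \<longrightarrow> (\<exists>k\<in>KP P. x - k \<in> char_cone P)" for n
  proof (induction n rule: less_induct)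
    case (less n)
    show ?case
    proof (intro allI impI)
      fix x assume x: "x \<in> P" and cn: "card {h\<in>H. fst h \<bullet> x < snd h} = n"
      have IH: "\<exists>k\<in>KP P. y - k \<in> char_cone P"
        if "y \<in> P" "card {h\<in>H. fst h \<bullet> y < snd h} < card {h\<in>H. fst h \<bullet> x < snd h}" for y
        using less.IH that cn by blast
      have xle: "fst h \<bullet> x \<le> snd h" if "h \<in> H" for h using x that unfolding P by blast
      show "\<exists>k\<in>KP P. x - k \<in> char_cone P"
      proof (cases "\<exists>z\<in>P. z \<noteq> x \<and> (\<forall>h\<in>H. fst h \<bullet> x = snd h \<longrightarrow> fst h \<bullet> z = snd h)")
        case False
        have "x extreme_point_of P"
          unfolding extreme_point_of_def
        proof (intro conjI ballI x)
          fix u v assume u: "u \<in> P" and v: "v \<in> P"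
          show "x \<notin> open_segment u v"
          proof
            assume "x \<in> open_segment u v"
            then obtain s where s: "0 < s" "s < 1" "x = (1 - s) *\<^sub>R u + s *\<^sub>R v" and uv: "u \<noteq> v"
              by (auto simp: in_segment)
            have "fst h \<bullet> u = snd h \<and> fst h \<bullet> v = snd h" if "h \<in> H" "fst h \<bullet> x = snd h" for h
            proof (rule comb_eq_aux[OF s(1,2)])
              show "fst h \<bullet> u \<le> snd h" "fst h \<bullet> v \<le> snd h" using u v that(1) unfolding P by blast+
              show "(1 - s) * (fst h \<bullet> u) + s * (fst h \<bullet> v) = snd h"
                using that(2) unfolding s(3) by (simp add: inner_add_right)
            qed
            then have "u = x" "v = x" using False u v by blast+
            then show False using uv by simp
          qed
        qed
        then have "x \<in> KP P" unfolding KP_def vertices_def by (intro hull_inc) simp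
        moreover have "x - x \<in> char_cone P" by (simp add: cc_0)
        ultimately show ?thesis by blast
      next
        case True
        then obtain z where z: "z \<in> P" "z \<noteq> x" and zact: "\<forall>h\<in>H. fst h \<bullet> x = snd h \<longrightarrow> fst h \<bullet> z = snd h"
          by blast
        define d where "d = z - x"
        have d0: "d \<noteq> 0" using z(2) unfolding d_def by simp
        have act: "\<forall>h\<in>H. fst h \<bullet> x = snd h \<longrightarrow> fst h \<bullet> d = 0"
          using zact unfolding d_def by (simp add: inner_diff_right)
        have actm: "\<forall>h\<in>H. fst h \<bullet> x = snd h \<longrightarrow> fst h \<bullet> (-d) = 0"
          using act by simp
        have notboth: "\<not> (d \<in> char_cone P \<and> - d \<in> char_cone P)"
          using pointedD[OF pt] d0 by blast
        consider (np) "\<not> (\<exists>h\<in>H. fst h \<bullet> d > 0)" | (nn) "\<not> (\<exists>h\<in>H. fst h \<bullet> d < 0)"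
          | (pn) "\<exists>h\<in>H. fst h \<bullet> d > 0" "\<exists>h\<in>H. fst h \<bullet> d < 0" by blast
        then show ?thesis
        proof cases
          case np
          then have dC: "d \<in> char_cone P" using cc_of_rep[OF P] by (simp add: not_less)
          have "\<exists>h\<in>H. fst h \<bullet> d < 0"
          proof (rule ccontr)
            assume "\<not> ?thesis"
            then have "- d \<in> char_cone P" using cc_of_rep[OF P] by (simp add: not_less)
            then show False using notboth dC by blast
          qed
          then have "\<exists>h\<in>H. fst h \<bullet> (-d) > 0" by simp
          from move_step[OF fin P x actm this] obtain t where t: "t > 0" "x + t *\<^sub>R (-d) \<in> P"
            "card {h\<in>H. fst h \<bullet> (x + t *\<^sub>R (-d)) < snd h} < card {h\<in>H. fst h \<bullet> x < snd h}" by blast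
          from IH[OF t(2,3)] obtain k where k: "k \<in> KP P" "x + t *\<^sub>R (-d) - k \<in> char_cone P" by blast
          have "(x + t *\<^sub>R (-d) - k) + t *\<^sub>R d \<in> char_cone P"
            using k(2) cc_scale[OF cvx dC, of t] t(1) by (intro cc_add) auto
          moreover have "(x + t *\<^sub>R (-d) - k) + t *\<^sub>R d = x - k" by (simp add: algebra_simps)
          ultimately show ?thesis using k(1) by auto
        next
          case nn
          then have dC: "- d \<in> char_cone P" using cc_of_rep[OF P] by (simp add: not_less)
          have "\<exists>h\<in>H. fst h \<bullet> d > 0"
          proof (rule ccontr)
            assume "\<not> ?thesis"
            then have "d \<in> char_cone P" using cc_of_rep[OF P] by (simp add: not_less)
            then show False using notboth dC by blast
          qed
          from move_step[OF fin P x act this] obtain t where t: "t > 0" "x + t *\<^sub>R d \<in> P"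
            "card {h\<in>H. fst h \<bullet> (x + t *\<^sub>R d) < snd h} < card {h\<in>H. fst h \<bullet> x < snd h}" by blast
          from IH[OF t(2,3)] obtain k where k: "k \<in> KP P" "x + t *\<^sub>R d - k \<in> char_cone P" by blast
          have "(x + t *\<^sub>R d - k) + t *\<^sub>R (-d) \<in> char_cone P"
            using k(2) cc_scale[OF cvx dC, of t] t(1) by (intro cc_add) auto
          moreover have "(x + t *\<^sub>R d - k) + t *\<^sub>R (-d) = x - k" by (simp add: algebra_simps)
          ultimately show ?thesis using k(1) by auto
        next
          case pn
          from pn(2) have "\<exists>h\<in>H. fst h \<bullet> (-d) > 0" by simp
          from move_step[OF fin P x actm this] obtain t2 where t2: "t2 > 0" "x + t2 *\<^sub>R (-d) \<in> P"
            "card {h\<in>H. fst h \<bullet> (x + t2 *\<^sub>R (-d)) < snd h} < card {h\<in>H. fst h \<bullet> x < snd h}" by blast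
          from move_step[OF fin P x act pn(1)] obtain t1 where t1: "t1 > 0" "x + t1 *\<^sub>R d \<in> P"
            "card {h\<in>H. fst h \<bullet> (x + t1 *\<^sub>R d) < snd h} < card {h\<in>H. fst h \<bullet> x < snd h}" by blast
          from IH[OF t1(2,3)] obtain k1 where k1: "k1 \<in> KP P" "x + t1 *\<^sub>R d - k1 \<in> char_cone P" by blast
          from IH[OF t2(2,3)] obtain k2 where k2: "k2 \<in> KP P" "x + t2 *\<^sub>R (-d) - k2 \<in> char_cone P" by blast
          define l where "l = t2 / (t1 + t2)"
          have l0: "0 \<le> l" "0 \<le> 1 - l" using t1 t2 unfolding l_def by (simp_all add: field_simps)
          have le: "l * t1 = (1 - l) * t2" using t1 t2 unfolding l_def by (simp add: field_simps)
          define k where "k = l *\<^sub>R k1 + (1 - l) *\<^sub>R k2"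
          have kK: "k \<in> KP P" unfolding k_def
            using convexD[OF KP_convex k1(1) k2(1) l0(1) l0(2)] by simp
          have "l *\<^sub>R (x + t1 *\<^sub>R d - k1) + (1 - l) *\<^sub>R (x + t2 *\<^sub>R (-d) - k2) \<in> char_cone P"
            using convexD[OF cc_convex[OF cvx] k1(2) k2(2) l0(1) l0(2)] by simp
          moreover have "l *\<^sub>R (x + t1 *\<^sub>R d - k1) + (1 - l) *\<^sub>R (x + t2 *\<^sub>R (-d) - k2) = x - k"
          proof -
            have "l *\<^sub>R (x + t1 *\<^sub>R d - k1) + (1 - l) *\<^sub>R (x + t2 *\<^sub>R (-d) - k2)
                = x + (l * t1 - (1 - l) * t2) *\<^sub>R d - k"
              unfolding k_def by (simp add: algebra_simps)
            then show ?thesis using le by simp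
          qed
          ultimately show ?thesis using kK by auto
        qed
      qed
    qed
  qed
  then show ?thesis using x0 by blast
qed

definition Sb :: "'a::real_normed_vector set \<Rightarrow> 'a \<Rightarrow> 'a set" where
  "Sb P p = {x \<in> KP P. p - x \<in> char_cone P}"

lemma base_Sb: "base P p = (THE x. x \<in> Sb P p \<and> (\<forall>y\<in>Sb P p. norm (p - x) \<le> norm (p - y)))"
  unfolding base_def Sb_def by (intro arg_cong[where f=The] ext) auto

lemma unique_min:
  fixes S :: "'a::euclidean_space set"
  assumes "closed S" "convex S" "S \<noteq> {}"
  shows "\<exists>!x. x \<in> S \<and> (\<forall>y\<in>S. norm (p - x) \<le> norm (p - y))"
proof -
  obtain x where x: "x \<in> S" "\<And>y. y \<in> S \<Longrightarrow> dist p x \<le> dist p y"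
    using distance_attains_inf[OF assms(1,3), of p] by blast
  have ex: "x \<in> S \<and> (\<forall>y\<in>S. norm (p - x) \<le> norm (p - y))" using x by (simp add: dist_norm)
  have uq: "x1 = x2" if 1: "x1 \<in> S \<and> (\<forall>y\<in>S. norm (p - x1) \<le> norm (p - y))"
    and 2: "x2 \<in> S \<and> (\<forall>y\<in>S. norm (p - x2) \<le> norm (p - y))" for x1 x2
  proof -
    define u where "u = p - x1"
    define v where "v = p - x2"
    have eq: "norm u = norm v" using 1 2 unfolding u_def v_def by (meson order.antisym)
    have mid: "(1/2) *\<^sub>R x1 + (1/2) *\<^sub>R x2 \<in> S"
      by (rule convexD[OF assms(2)]) (use 1 2 in auto)
    have "norm u \<le> norm (p - ((1/2) *\<^sub>R x1 + (1/2) *\<^sub>R x2))" using 1 mid unfolding u_def by blast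
    also have "p - ((1/2) *\<^sub>R x1 + (1/2) *\<^sub>R x2) = (1/2) *\<^sub>R (u + v)"
      unfolding u_def v_def by (simp add: algebra_simps flip: scaleR_add_left)
    finally have "norm u \<le> (1/2) * norm (u + v)" by simp
    then have "(2 * norm u)^2 \<le> (norm (u + v))^2"
      by (intro power_mono) auto
    moreover have "(norm (u + v))^2 + (norm (u - v))^2 = 2 * (norm u)^2 + 2 * (norm v)^2"
      by (simp add: power2_norm_eq_inner inner_add_left inner_add_right inner_diff_left
          inner_diff_right inner_commute)
    moreover have "(2 * norm u)^2 = 2 * (norm u)^2 + 2 * (norm v)^2" using eq by (simp add: power_mult_distrib)
    ultimately have "(norm (u - v))^2 \<le> 0" by linarith
    then have "u = v" by simp
    then show ?thesis unfolding u_def v_def by simp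
  qed
  show ?thesis using ex uq by blast
qed

lemma KP_sub:
  assumes "convex P" shows "KP P \<subseteq> P"
  unfolding KP_def vertices_def
  by (rule hull_minimal) (auto simp: extreme_point_of_def assms)

lemma KP_compact:
  fixes P :: "'a::euclidean_space set"
  assumes "polyhedron P" shows "compact (KP P)"
  unfolding KP_def vertices_def
  using finite_polyhedron_extreme_points[OF assms] by (rule finite_imp_compact_convex_hull)

lemma Sb_props:
  fixes P :: "'a::euclidean_space set"
  assumes "polyhedron P" "pointed P" "p \<in> P"
  shows "closed (Sb P p)" "convex (Sb P p)" "Sb P p \<noteq> {}"
proof -
  have cl: "closed (char_cone P)" by (rule cc_closed[OF polyhedron_imp_closed[OF assms(1)]])
  have cv: "convex (char_cone P)" by (rule cc_convex[OF polyhedron_imp_convex[OF assms(1)]])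
  have eq: "Sb P p = KP P \<inter> (\<lambda>x. p - x) -` char_cone P" unfolding Sb_def by auto
  have "closed ((\<lambda>x. p - x) -` char_cone P)" by (intro closed_vimage cl continuous_intros)
  then show "closed (Sb P p)" unfolding eq
    using KP_compact[OF assms(1)] by (intro closed_Int compact_imp_closed) auto
  have "convex ((\<lambda>x. p - x) -` char_cone P)"
  proof (rule convexI)
    fix x y :: 'a and u v :: real
    assume "x \<in> (\<lambda>x. p - x) -` char_cone P" "y \<in> (\<lambda>x. p - x) -` char_cone P" "0 \<le> u" "0 \<le> v" "u + v = 1"
    then have "u *\<^sub>R (p - x) + v *\<^sub>R (p - y) \<in> char_cone P" using convexD[OF cv] by simp
    moreover have "u *\<^sub>R (p - x) + v *\<^sub>R (p - y) = p - (u *\<^sub>R x + v *\<^sub>R y)"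
      using \<open>u + v = 1\<close> by (simp add: algebra_simps flip: scaleR_add_left)
    ultimately show "u *\<^sub>R x + v *\<^sub>R y \<in> (\<lambda>x. p - x) -` char_cone P" by simp
  qed
  then show "convex (Sb P p)" unfolding eq using KP_convex by (rule convex_Int[rotated])
  show "Sb P p \<noteq> {}" using exists_base_point[OF assms] unfolding Sb_def by blast
qed

lemma base_props:
  fixes P :: "'a::euclidean_space set"
  assumes "polyhedron P" "pointed P" "p \<in> P"
  shows "base P p \<in> Sb P p" "\<And>y. y \<in> Sb P p \<Longrightarrow> norm (p - base P p) \<le> norm (p - y)"
    and "\<And>x. x \<in> Sb P p \<Longrightarrow> (\<forall>y\<in>Sb P p. norm (p - x) \<le> norm (p - y)) \<Longrightarrow> base P p = x"
proof -
  have u: "\<exists>!x. x \<in> Sb P p \<and> (\<forall>y\<in>Sb P p. norm (p - x) \<le> norm (p - y))"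
    using unique_min Sb_props[OF assms] by blast
  note t = theI'[OF u, folded base_Sb]
  show "base P p \<in> Sb P p" using t by blast
  show "\<And>y. y \<in> Sb P p \<Longrightarrow> norm (p - base P p) \<le> norm (p - y)" using t by blast
  show "\<And>x. x \<in> Sb P p \<Longrightarrow> (\<forall>y\<in>Sb P p. norm (p - x) \<le> norm (p - y)) \<Longrightarrow> base P p = x"
    unfolding base_Sb using u by (intro the1_equality) auto
qed

lemma face_Sb:
  fixes P :: "'a::euclidean_space set"
  assumes poly: "polyhedron P" and F: "F face_of P" and pF: "p \<in> F"
  shows "Sb F p = Sb P p"
proof -
  have cvx: "convex P" using poly by (rule polyhedron_imp_convex)
  have clo: "closed P" using poly by (rule polyhedron_imp_closed)
  have FP: "F \<subseteq> P" using F by (rule face_of_imp_subset)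
  have vF: "v \<in> vertices F \<longleftrightarrow> v \<in> vertices P \<and> v \<in> F" for v
    unfolding vertices_def using extreme_point_of_face[OF F] by simp
  have KFP: "KP F \<subseteq> KP P" unfolding KP_def by (rule hull_mono) (use vF in blast)
  have KPP: "KP P \<subseteq> P" by (rule KP_sub[OF cvx])
  have KPF: "KP P \<inter> F \<subseteq> KP F"
  proof -
    have "(F \<inter> KP P) face_of KP P"
      unfolding face_of_def
    proof (intro conjI ballI impI)
      show "F \<inter> KP P \<subseteq> KP P" by blast
      show "convex (F \<inter> KP P)" using face_of_imp_convex[OF F] KP_convex by (rule convex_Int)
      fix a b x assume a: "a \<in> KP P" and b: "b \<in> KP P" and x: "x \<in> F \<inter> KP P" and s: "x \<in> open_segment a b"
      have "a \<in> F \<and> b \<in> F"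
        using F a b x s KPP unfolding face_of_def by blast
      then show "a \<in> F \<inter> KP P" "b \<in> F \<inter> KP P" using a b by auto
    qed
    moreover have "compact (vertices P)"
      unfolding vertices_def using finite_polyhedron_extreme_points[OF poly] by (rule finite_imp_compact)
    ultimately obtain S' where S': "S' \<subseteq> vertices P" "F \<inter> KP P = convex hull S'"
      using face_of_convex_hull_subset[of "vertices P" "F \<inter> KP P"] unfolding KP_def by blast
    have "S' \<subseteq> F" using S'(2) hull_subset[of S' convex] by blast
    then have "S' \<subseteq> vertices F" using S'(1) vF by blast
    then have "convex hull S' \<subseteq> KP F" unfolding KP_def by (rule hull_mono)
    then show ?thesis using S'(2) by blast
  qed
  obtain a b where ab: "P \<subseteq> {x. a \<bullet> x \<le> b}" "F = P \<inter> {x. a \<bullet> x = b}"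
    using exposed_face_of_polyhedron[OF poly, of F] F unfolding exposed_face_of_def by blast
  show ?thesis
  proof
    show "Sb F p \<subseteq> Sb P p"
    proof
      fix x assume "x \<in> Sb F p"
      then have x: "x \<in> KP F" and c: "p - x \<in> char_cone F" unfolding Sb_def by auto
      have "\<And>n::nat. p + of_nat n *\<^sub>R (p - x) \<in> P" using cc_nat[OF c pF] FP by blast
      then have "p - x \<in> char_cone P" using cc_from_ray[OF clo cvx] pF FP by blast
      then show "x \<in> Sb P p" using x KFP unfolding Sb_def by blast
    qed
  next
    show "Sb P p \<subseteq> Sb F p"
    proof
      fix x assume "x \<in> Sb P p"
      then have x: "x \<in> KP P" and c: "p - x \<in> char_cone P" unfolding Sb_def by auto
      define c where "c = p - x"
      have xP: "x \<in> P" using x KPP by blast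
      have "x \<in> F \<and> c \<in> char_cone F"
      proof (cases "c = 0")
        case True
        then show ?thesis using pF cc_0 unfolding c_def by simp
      next
        case False
        have c': "c \<in> char_cone P" using c unfolding c_def .
        have x1: "x + c \<in> P" using c' xP unfolding char_cone_def by blast
        have x2: "x + c + c \<in> P" using c' x1 unfolding char_cone_def by blast
        have pe: "p = x + c" unfolding c_def by simp
        have "p \<in> open_segment x (x + c + c)"
          unfolding in_segment
        proof (intro conjI exI[of _ "1/2"])
          show "x \<noteq> x + c + c"
          proof
            assume "x = x + c + c"
            then have "(2::real) *\<^sub>R c = 0" by (simp add: scaleR_2 algebra_simps)
            then show False using False by simp
          qed
        qed (simp_all add: pe algebra_simps flip: scaleR_add_left)
        then have xF: "x \<in> F" and x2F: "x + c + c \<in> F"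
          using F xP x2 pF unfolding face_of_def by blast+
        have "a \<bullet> x = b" "a \<bullet> (x + c + c) = b" using xF x2F ab(2) by auto
        then have ac: "a \<bullet> c = 0" by (simp add: inner_add_right)
        have "c \<in> char_cone F"
          unfolding char_cone_def
        proof (intro CollectI ballI)
          fix f assume f: "f \<in> F"
          then have "f + c \<in> P" using c' FP unfolding char_cone_def by blast
          moreover have "a \<bullet> (f + c) = b" using f ab(2) ac by (simp add: inner_add_right)
          ultimately show "f + c \<in> F" using ab(2) by blast
        qed
        then show ?thesis using xF by blast
      qed
      then show "x \<in> Sb F p" using x KPF unfolding Sb_def c_def by blast
    qed
  qed
qed

lemma face_base:
  fixes P :: "'a::euclidean_space set"
  assumes "polyhedron P" "F face_of P" "p \<in> F"
  shows "base F p = base P p"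
  unfolding base_Sb face_Sb[OF assms] ..

lemma f_convex:
  fixes P :: "'a::euclidean_space set"
  assumes poly: "polyhedron P" and pt: "pointed P" and p: "p \<in> P" and q: "q \<in> P"
    and s: "0 \<le> s" "s \<le> 1"
  shows "norm (((1 - s) *\<^sub>R p + s *\<^sub>R q) - base P ((1 - s) *\<^sub>R p + s *\<^sub>R q))
           \<le> (1 - s) * norm (p - base P p) + s * norm (q - base P q)"
proof -
  have cvx: "convex P" using poly by (rule polyhedron_imp_convex)
  define z where "z = (1 - s) *\<^sub>R p + s *\<^sub>R q"
  have zP: "z \<in> P" unfolding z_def using convexD[OF cvx p q, of "1 - s" s] s by simp
  have bp: "base P p \<in> KP P" "p - base P p \<in> char_cone P"
    using base_props(1)[OF poly pt p] unfolding Sb_def by auto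
  have bq: "base P q \<in> KP P" "q - base P q \<in> char_cone P"
    using base_props(1)[OF poly pt q] unfolding Sb_def by auto
  define x where "x = (1 - s) *\<^sub>R base P p + s *\<^sub>R base P q"
  have xK: "x \<in> KP P" unfolding x_def using convexD[OF KP_convex bp(1) bq(1), of "1 - s" s] s by simp
  have "(1 - s) *\<^sub>R (p - base P p) + s *\<^sub>R (q - base P q) \<in> char_cone P"
    using convexD[OF cc_convex[OF cvx] bp(2) bq(2), of "1 - s" s] s by simp
  moreover have "(1 - s) *\<^sub>R (p - base P p) + s *\<^sub>R (q - base P q) = z - x"
    unfolding z_def x_def by (simp add: algebra_simps)
  ultimately have "x \<in> Sb P z" using xK unfolding Sb_def by simp
  then have "norm (z - base P z) \<le> norm (z - x)" by (rule base_props(2)[OF poly pt zP])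
  also have "\<dots> = norm ((1 - s) *\<^sub>R (p - base P p) + s *\<^sub>R (q - base P q))"
    using \<open>(1 - s) *\<^sub>R (p - base P p) + s *\<^sub>R (q - base P q) = z - x\<close> by simp
  also have "\<dots> \<le> norm ((1 - s) *\<^sub>R (p - base P p)) + norm (s *\<^sub>R (q - base P q))"
    by (rule norm_triangle_ineq)
  also have "\<dots> = (1 - s) * norm (p - base P p) + s * norm (q - base P q)"
    using s by simp
  finally show ?thesis unfolding z_def .
qed

lemma star_radius:
  fixes P :: "'a::euclidean_space set"
  assumes poly: "polyhedron P" and p: "p \<in> P"
  obtains e where "e > 0"
    "\<And>q. q \<in> P \<Longrightarrow> q \<noteq> p \<Longrightarrow> norm (q - p) \<le> e \<Longrightarrow> p + (e / norm (q - p)) *\<^sub>R (q - p) \<in> P"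
proof -
  obtain H :: "('a \<times> real) set" where fin: "finite H" and P: "P = {x. \<forall>h\<in>H. fst h \<bullet> x \<le> snd h}"
    using poly_rep[OF poly] by blast
  define I where "I = {h\<in>H. fst h \<bullet> p < snd h}"
  define g where "g h = (snd h - fst h \<bullet> p) / (norm (fst h) + 1)" for h
  define e where "e = Min (insert 1 (g ` I))"
  have finI: "finite I" using fin unfolding I_def by simp
  have gpos: "g h > 0" if "h \<in> I" for h
  proof -
    have "snd h - fst h \<bullet> p > 0" "norm (fst h) + 1 > 0" using that unfolding I_def
      by (simp_all add: add_nonneg_pos)
    then show ?thesis unfolding g_def by (rule divide_pos_pos)
  qed
  have epos: "e > 0" unfolding e_def using finI gpos by (subst Min_gr_iff) auto
  have ele: "e \<le> g h" if "h \<in> I" for h unfolding e_def using finI that by (intro Min_le) auto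
  have pl: "fst h \<bullet> p \<le> snd h" if "h \<in> H" for h using p that unfolding P by blast
  show ?thesis
  proof (rule that[OF epos])
    fix q assume q: "q \<in> P" "q \<noteq> p" "norm (q - p) \<le> e"
    define mu where "mu = e / norm (q - p)"
    have np: "norm (q - p) > 0" using q(2) by simp
    have mu0: "mu \<ge> 0" unfolding mu_def using epos np by simp
    have mun: "mu * norm (q - p) = e" unfolding mu_def using np by simp
    show "p + (e / norm (q - p)) *\<^sub>R (q - p) \<in> P"
      unfolding mu_def[symmetric] P
    proof (intro CollectI ballI)
      fix h assume hH: "h \<in> H"
      have eq: "fst h \<bullet> (p + mu *\<^sub>R (q - p)) = fst h \<bullet> p + mu * (fst h \<bullet> (q - p))"
        by (simp add: inner_add_right)
      show "fst h \<bullet> (p + mu *\<^sub>R (q - p)) \<le> snd h"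
      proof (cases "h \<in> I")
        case True
        have "mu * (fst h \<bullet> (q - p)) \<le> mu * (norm (fst h) * norm (q - p))"
          using mu0 by (intro mult_left_mono norm_cauchy_schwarz) auto
        also have "\<dots> = norm (fst h) * e" using mun by (simp add: algebra_simps)
        also have "\<dots> \<le> norm (fst h) * g h" using ele[OF True] by (simp add: mult_left_mono)
        also have "\<dots> \<le> snd h - fst h \<bullet> p"
        proof -
          have d: "snd h - fst h \<bullet> p > 0" using True unfolding I_def by simp
          have "norm (fst h) * g h = (snd h - fst h \<bullet> p) * (norm (fst h) / (norm (fst h) + 1))"
            unfolding g_def by (simp add: field_simps)
          also have "\<dots> \<le> (snd h - fst h \<bullet> p) * 1"
          proof (rule mult_left_mono)
            have "norm (fst h) + 1 > 0" by (simp add: add_nonneg_pos)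
            then show "norm (fst h) / (norm (fst h) + 1) \<le> 1" by (simp add: divide_le_eq_1)
          qed (use d in simp)
          finally show ?thesis by simp
        qed
        finally show ?thesis using eq by linarith
      next
        case False
        then have "fst h \<bullet> p = snd h" using pl[OF hH] hH unfolding I_def by auto
        moreover have "fst h \<bullet> q \<le> snd h" using q(1) hH unfolding P by blast
        ultimately have "fst h \<bullet> (q - p) \<le> 0" by (simp add: inner_diff_right)
        then have "mu * (fst h \<bullet> (q - p)) \<le> 0" using mu0 by (simp add: mult_nonneg_nonpos)
        then show ?thesis using eq pl[OF hH] by linarith
      qed
    qed
  qed
qed

lemma usc:
  fixes P :: "'a::euclidean_space set"
  assumes poly: "polyhedron P" and pt: "pointed P" and p: "p \<in> P"
  obtains e M where "e > 0"
    "\<And>q. q \<in> P \<Longrightarrow> norm (q - p) \<le> e \<Longrightarrow>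
        norm (q - base P q) \<le> norm (p - base P p) + norm (q - p) * M / e"
proof -
  obtain e where epos: "e > 0" and star:
    "\<And>q. q \<in> P \<Longrightarrow> q \<noteq> p \<Longrightarrow> norm (q - p) \<le> e \<Longrightarrow> p + (e / norm (q - p)) *\<^sub>R (q - p) \<in> P"
    using star_radius[OF poly p] by blast
  obtain B where B: "B > 0" "\<And>x. x \<in> KP P \<Longrightarrow> norm x \<le> B"
    using compact_imp_bounded[OF KP_compact[OF poly]] unfolding bounded_pos by blast
  define M where "M = norm p + e + B"
  show ?thesis
  proof (rule that[OF epos])
    fix q assume q: "q \<in> P" "norm (q - p) \<le> e"
    show "norm (q - base P q) \<le> norm (p - base P p) + norm (q - p) * M / e"
    proof (cases "q = p")
      case True then show ?thesis by simp
    next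
      case False
      define n where "n = norm (q - p)"
      have npos: "n > 0" using False unfolding n_def by simp
      define w where "w = p + (e / n) *\<^sub>R (q - p)"
      have wP: "w \<in> P" unfolding w_def n_def using star[OF q(1) False q(2)] .
      define s where "s = n / e"
      have s0: "0 \<le> s" "s \<le> 1" unfolding s_def n_def using epos q(2) npos by (simp_all add: field_simps n_def)
      have se: "s * (e / n) = 1"
      proof -
        have "n \<noteq> 0" "e \<noteq> 0" using npos epos by auto
        then show ?thesis by (simp add: s_def)
      qed
      have qeq: "(1 - s) *\<^sub>R p + s *\<^sub>R w = q"
      proof -
        have "s *\<^sub>R ((e / n) *\<^sub>R (q - p)) = q - p" by (simp only: scaleR_scaleR se scaleR_one)
        then show ?thesis unfolding w_def by (simp add: algebra_simps)
      qed
      have nw: "norm w \<le> norm p + e"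
      proof -
        have "norm ((e / n) *\<^sub>R (q - p)) = e" using npos epos unfolding n_def by simp
        then show ?thesis unfolding w_def using norm_triangle_ineq[of p "(e / n) *\<^sub>R (q - p)"] by simp
      qed
      have bw: "base P w \<in> KP P" using base_props(1)[OF poly pt wP] unfolding Sb_def by simp
      have fw: "norm (w - base P w) \<le> M"
      proof -
        have "norm (w - base P w) \<le> norm w + norm (base P w)" by (rule norm_triangle_ineq4)
        then show ?thesis using nw B(2)[OF bw] unfolding M_def by linarith
      qed
      have "norm (q - base P q) \<le> (1 - s) * norm (p - base P p) + s * norm (w - base P w)"
        using f_convex[OF poly pt p wP s0] unfolding qeq .
      also have "\<dots> \<le> norm (p - base P p) + s * M"
      proof -
        have "(1 - s) * norm (p - base P p) \<le> norm (p - base P p)" using s0 by (simp add: mult_left_le_one_le)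
        moreover have "s * norm (w - base P w) \<le> s * M" using s0 fw by (simp add: mult_left_mono)
        ultimately show ?thesis by linarith
      qed
      also have "s * M = norm (q - p) * M / e" unfolding s_def n_def by simp
      finally show ?thesis .
    qed
  qed
qed

lemma seq_closed:
  assumes "closed S" "\<And>n. X n \<in> S" "X \<longlonglongrightarrow> l" shows "l \<in> S"
  by (rule closed_sequentially[OF assms])

lemma base_cont:
  fixes P :: "'a::euclidean_space set"
  assumes poly: "polyhedron P" and pt: "pointed P"
  shows "continuous_on P (base P)"
proof -
  have cloP: "closed P" using poly by (rule polyhedron_imp_closed)
  have cloK: "closed (KP P)" using KP_compact[OF poly] by (rule compact_imp_closed)
  have cloC: "closed (char_cone P)" using cloP by (rule cc_closed)
  have fim: "base P \<in> P \<rightarrow> KP P" using base_props(1)[OF poly pt] unfolding Sb_def by auto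
  define G where "G = (\<lambda>x. Pair x (base P x)) ` P"
  have "closed G"
    unfolding closed_sequential_limits
  proof (intro allI impI, elim conjE)
    fix X l assume XG: "\<forall>n. X n \<in> G" and Xl: "X \<longlonglongrightarrow> l"
    define q where "q n = fst (X n)" for n
    have qX: "q n \<in> P \<and> snd (X n) = base P (q n)" for n
    proof -
      have "\<exists>y\<in>P. X n = (y, base P y)" using XG unfolding G_def by blast
      then obtain y where "y \<in> P" "X n = (y, base P y)" by blast
      then show ?thesis unfolding q_def by simp
    qed
    have qP: "q n \<in> P" for n using qX by blast
    have Xq: "snd (X n) = base P (q n)" for n using qX by blast
    have ql: "q \<longlonglongrightarrow> fst l" unfolding q_def using Xl by (rule tendsto_fst)
    have bl: "(\<lambda>n. base P (q n)) \<longlonglongrightarrow> snd l" using tendsto_snd[OF Xl] unfolding Xq .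
    define p where "p = fst l"
    define x where "x = snd l"
    have pP: "p \<in> P" unfolding p_def by (rule seq_closed[OF cloP qP ql])
    have "base P (q n) \<in> KP P" for n using fim qP by blast
    then have xK: "x \<in> KP P" unfolding x_def by (rule seq_closed[OF cloK _ bl])
    have dl: "(\<lambda>n. q n - base P (q n)) \<longlonglongrightarrow> p - x"
      unfolding p_def x_def using ql bl by (rule tendsto_diff)
    have "q n - base P (q n) \<in> char_cone P" for n
      using base_props(1)[OF poly pt qP[of n]] unfolding Sb_def by simp
    then have xC: "p - x \<in> char_cone P" by (rule seq_closed[OF cloC _ dl])
    have xS: "x \<in> Sb P p" using xK xC unfolding Sb_def by simp
    obtain e M where epos: "e > 0" and uscq:
      "\<And>q. q \<in> P \<Longrightarrow> norm (q - p) \<le> e \<Longrightarrow>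
        norm (q - base P q) \<le> norm (p - base P p) + norm (q - p) * M / e"
      using usc[OF poly pt pP] by blast
    have "\<forall>\<^sub>F n in sequentially. dist (q n) p < e" using tendstoD[OF ql epos] unfolding p_def .
    then obtain N where N: "\<And>n. n \<ge> N \<Longrightarrow> dist (q n) p < e" unfolding eventually_sequentially by blast
    have "norm (p - x) \<le> norm (p - base P p) + 0 * M / e"
    proof (rule LIMSEQ_le)
      show "(\<lambda>n. norm (q n - base P (q n))) \<longlonglongrightarrow> norm (p - x)" using dl by (rule tendsto_norm)
      have "(\<lambda>n. norm (q n - p)) \<longlonglongrightarrow> norm (p - p)"
      proof -
        have "(\<lambda>n. q n - p) \<longlonglongrightarrow> p - p" using ql unfolding p_def by (rule tendsto_diff[OF _ tendsto_const])
        then show ?thesis by (rule tendsto_norm)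
      qed
      then show "(\<lambda>n. norm (p - base P p) + norm (q n - p) * M / e) \<longlonglongrightarrow> norm (p - base P p) + 0 * M / e"
      proof -
        have "(\<lambda>n. norm (q n - p) * M) \<longlonglongrightarrow> norm (p - p) * M"
          by (rule tendsto_mult[OF \<open>(\<lambda>n. norm (q n - p)) \<longlonglongrightarrow> norm (p - p)\<close> tendsto_const])
        then have "(\<lambda>n. norm (q n - p) * M / e) \<longlonglongrightarrow> norm (p - p) * M / e"
          by (rule tendsto_divide[OF _ tendsto_const]) (use epos in simp)
        then have "(\<lambda>n. norm (p - base P p) + norm (q n - p) * M / e) \<longlonglongrightarrow> norm (p - base P p) + norm (p - p) * M / e"
          by (rule tendsto_add[OF tendsto_const])
        then show ?thesis by simp
      qed
      show "\<exists>N. \<forall>n\<ge>N. norm (q n - base P (q n)) \<le> norm (p - base P p) + norm (q n - p) * M / e"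
      proof (intro exI[of _ N] allI impI)
        fix n assume "n \<ge> N"
        then have "norm (q n - p) \<le> e" using N[of n] by (simp add: dist_norm)
        then show "norm (q n - base P (q n)) \<le> norm (p - base P p) + norm (q n - p) * M / e"
          using uscq[OF qP] by blast
      qed
    qed
    then have "norm (p - x) \<le> norm (p - base P p)" by simp
    have "\<forall>y\<in>Sb P p. norm (p - x) \<le> norm (p - y)"
    proof
      fix y assume "y \<in> Sb P p"
      then have "norm (p - base P p) \<le> norm (p - y)" by (rule base_props(2)[OF poly pt pP])
      then show "norm (p - x) \<le> norm (p - y)" using \<open>norm (p - x) \<le> norm (p - base P p)\<close> by linarith
    qed
    then have "base P p = x" by (rule base_props(3)[OF poly pt pP xS])
    then have "l = (p, base P p)" unfolding p_def x_def by simp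
    then show "l \<in> G" unfolding G_def using pP by blast
  qed
  moreover have "G \<subseteq> P \<times> KP P" unfolding G_def using fim by auto
  ultimately have "closedin (top_of_set (P \<times> KP P)) G" by (intro closed_subset)
  then show ?thesis using continuous_closed_graph_eq[OF KP_compact[OF poly] fim] unfolding G_def by blast
qed

theorem mainTheorem12:
  fixes \<C> :: "'a::euclidean_space set set"
  assumes "polyhedral_complex \<C>"
    and "\<forall>P\<in>\<C>. pointed P"
  shows "(\<forall>P1\<in>\<C>. \<forall>P2\<in>\<C>. \<forall>p\<in>P1 \<inter> P2. base P1 p = base P2 p)
       \<and> (\<forall>p\<in>\<Union>\<C>. base_complex \<C> p \<in> \<Union>(com_part \<C>))
       \<and> continuous_on (\<Union>\<C>) (base_complex \<C>)
       \<and> strong_deformation_retraction (\<Union>\<C>) (\<Union>(com_part \<C>))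
           (\<lambda>(p, t). t *\<^sub>R base_complex \<C> p + (1 - t) *\<^sub>R p)"
proof -
  have fin: "finite \<C>" using assms(1) unfolding polyhedral_complex_def by blast
  have poly: "polyhedron P" if "P \<in> \<C>" for P using assms(1) that unfolding polyhedral_complex_def by blast
  have inter: "(P \<inter> Q) face_of P \<and> (P \<inter> Q) face_of Q" if "P \<in> \<C>" "Q \<in> \<C>" for P Q
    using assms(1) that unfolding polyhedral_complex_def by blast
  have pt: "pointed P" if "P \<in> \<C>" for P using assms(2) that by blast
  have A: "base P1 p = base P2 p" if "P1 \<in> \<C>" "P2 \<in> \<C>" "p \<in> P1 \<inter> P2" for P1 P2 p
  proof -
    have "base (P1 \<inter> P2) p = base P1 p" using face_base[OF poly[OF that(1)] _ that(3)] inter[OF that(1,2)] by blast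
    moreover have "base (P1 \<inter> P2) p = base P2 p" using face_base[OF poly[OF that(2)] _ that(3)] inter[OF that(1,2)] by blast
    ultimately show ?thesis by simp
  qed
  have bc: "base_complex \<C> p = base P p" if "P \<in> \<C>" "p \<in> P" for P p
  proof -
    define Q where "Q = (SOME P. P \<in> \<C> \<and> p \<in> P)"
    have Q: "Q \<in> \<C> \<and> p \<in> Q" unfolding Q_def by (rule someI[of _ P]) (use that in blast)
    have "base_complex \<C> p = base Q p" unfolding base_complex_def Q_def ..
    also have "\<dots> = base P p" using A[of Q P p] Q that by blast
    finally show ?thesis .
  qed
  have KPs: "KP P \<subseteq> P" if "P \<in> \<C>" for P by (rule KP_sub[OF polyhedron_imp_convex[OF poly[OF that]]])
  have B: "base_complex \<C> p \<in> \<Union>(com_part \<C>)" if pU: "p \<in> \<Union>\<C>" for p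
  proof -
    obtain P where P: "P \<in> \<C>" "p \<in> P" using pU by blast
    have bK: "base P p \<in> KP P" using base_props(1)[OF poly[OF P(1)] pt[OF P(1)] P(2)] unfolding Sb_def by simp
    have Kc: "KP P \<in> com_part \<C>" unfolding com_part_def using P(1) face_of_refl[OF KP_convex] by blast
    show ?thesis unfolding bc[OF P] by (rule UnionI[OF Kc bK])
  qed
  have C: "continuous_on (\<Union>\<C>) (base_complex \<C>)"
  proof -
    have "continuous_on (\<Union>P\<in>\<C>. P) (base_complex \<C>)"
    proof (rule continuous_on_closed_Union[OF fin])
      fix P assume P: "P \<in> \<C>"
      show "closed P" by (rule polyhedron_imp_closed[OF poly[OF P]])
      show "continuous_on P (base_complex \<C>)"
        using base_cont[OF poly[OF P] pt[OF P]] by (rule continuous_on_cong[THEN iffD2, rotated 2]) (use bc[OF P] in auto)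
    qed
    then show ?thesis by simp
  qed
  have fix_pt: "base_complex \<C> a = a" if aU: "a \<in> \<Union>(com_part \<C>)" for a
  proof -
    obtain P F where P: "P \<in> \<C>" "F face_of KP P" "a \<in> F" using aU unfolding com_part_def by blast
    have aK: "a \<in> KP P" using P(2,3) face_of_imp_subset by blast
    have aP: "a \<in> P" using aK KPs[OF P(1)] by blast
    have aS: "a \<in> Sb P a" using aK cc_0 unfolding Sb_def by simp
    have "base P a = a" by (rule base_props(3)[OF poly[OF P(1)] pt[OF P(1)] aP aS]) simp
    then show ?thesis using bc[OF P(1) aP] by simp
  qed
  have Hc: "(\<lambda>(p, t). t *\<^sub>R base_complex \<C> p + (1 - t) *\<^sub>R p)
      = (\<lambda>z. snd z *\<^sub>R base_complex \<C> (fst z) + (1 - snd z) *\<^sub>R fst z)"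
    by (simp add: case_prod_beta')
  have D: "strong_deformation_retraction (\<Union>\<C>) (\<Union>(com_part \<C>))
           (\<lambda>(p, t). t *\<^sub>R base_complex \<C> p + (1 - t) *\<^sub>R p)"
    unfolding strong_deformation_retraction_def
  proof (intro conjI ballI)
    show "\<Union>(com_part \<C>) \<subseteq> \<Union>\<C>"
    proof
      fix a assume "a \<in> \<Union>(com_part \<C>)"
      then obtain P F where P: "P \<in> \<C>" "F face_of KP P" "a \<in> F" unfolding com_part_def by blast
      then show "a \<in> \<Union>\<C>" using face_of_imp_subset KPs[OF P(1)] by blast
    qed
    have c1: "continuous_on (\<Union>\<C> \<times> {0..1}) (\<lambda>z. base_complex \<C> (fst z))"
      by (rule continuous_on_compose2[OF C continuous_on_fst]) auto
    have "continuous_on (\<Union>\<C> \<times> {0..1::real}) (\<lambda>z. snd z *\<^sub>R base_complex \<C> (fst z) + (1 - snd z) *\<^sub>R fst z)"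
      by (intro continuous_on_add continuous_on_scaleR continuous_on_diff continuous_on_const
          continuous_on_fst continuous_on_snd c1 continuous_on_id)
    then show "continuous_on (\<Union>\<C> \<times> {0..1}) (\<lambda>(p, t). t *\<^sub>R base_complex \<C> p + (1 - t) *\<^sub>R p)"
      unfolding Hc .
    show "(\<lambda>(p, t). t *\<^sub>R base_complex \<C> p + (1 - t) *\<^sub>R p) ` (\<Union>\<C> \<times> {0..1}) \<subseteq> \<Union>\<C>"
    proof
      fix y assume "y \<in> (\<lambda>(p, t). t *\<^sub>R base_complex \<C> p + (1 - t) *\<^sub>R p) ` (\<Union>\<C> \<times> {0..1})"
      then obtain z where z: "z \<in> \<Union>\<C> \<times> {0..1}" "y = (\<lambda>(p, t). t *\<^sub>R base_complex \<C> p + (1 - t) *\<^sub>R p) z"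
        by (rule imageE)
      obtain p t where zpt: "z = (p, t)" by (cases z)
      have pt': "p \<in> \<Union>\<C>" "t \<in> {0..1}" "y = t *\<^sub>R base_complex \<C> p + (1 - t) *\<^sub>R p"
        using z unfolding zpt by auto
      obtain P where P: "P \<in> \<C>" "p \<in> P" using pt'(1) by blast
      have "base P p \<in> KP P" using base_props(1)[OF poly[OF P(1)] pt[OF P(1)] P(2)] unfolding Sb_def by simp
      then have bP: "base_complex \<C> p \<in> P" using bc[OF P] KPs[OF P(1)] by auto
      have "t *\<^sub>R base_complex \<C> p + (1 - t) *\<^sub>R p \<in> P"
        using convexD[OF polyhedron_imp_convex[OF poly[OF P(1)]] bP P(2), of t "1 - t"] pt'(2) by simp
      then show "y \<in> \<Union>\<C>" using P(1) pt'(3) by blast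
    qed
    fix x assume x: "x \<in> \<Union>\<C>"
    show "(\<lambda>(p, t). t *\<^sub>R base_complex \<C> p + (1 - t) *\<^sub>R p) (x, 0) = x" by simp
    show "(\<lambda>(p, t). t *\<^sub>R base_complex \<C> p + (1 - t) *\<^sub>R p) (x, 1) \<in> \<Union>(com_part \<C>)"
      using B[OF x] by simp
  next
    fix a t assume a: "a \<in> \<Union>(com_part \<C>)" and t: "t \<in> {0..1::real}"
    show "(\<lambda>(p, t). t *\<^sub>R base_complex \<C> p + (1 - t) *\<^sub>R p) (a, t) = a"
      using fix_pt[OF a] by (simp add: algebra_simps flip: scaleR_add_left)
  qed
  show ?thesis using A B C D by blast
qed

end
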